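(* Let $G=(V,E)$ be an undirected graph with vertex set $V=\{v_1,\dots,v_n\}$ and edge set $E=\{e_{i_1j_1},\dots,e_{i_mj_m}\}$, where $e_{i_kj_k}$ joins $v_{i_k}$ and $v_{j_k}$. Each edge $e_{i_kj_k}$ carries a vector $C_{i_kj_k}\in\mathbb{R}^q$, and $\{p_\theta\}$ is a family of functions $\mathbb{R}^q\to(0,\infty)$ depending differentiably on a parameter vector $\theta\in\mathbb{R}^{n_\theta}$. For each $\theta$, let $G_\theta$ be the weighted graph on $(V,E)$ with edge weights $w_{i_kj_k}=p_\theta(C_{i_kj_k})$, and let $L_\theta$ be its Laplacian. Let $S\subseteq V$ and let $F\in\mathbb{R}^{|S|\times|S|}$ be a given matrix with zero diagonal, with entries $F_{lk}$ indexed by $v_l,v_k\in S$. Define $$\mathcal{L}(\theta)=\|R_S(\theta)-F\|_F^2=\sum_{v_l,v_k\in S}\big(R_S(\theta)_{lk}-F_{lk}\big)^2,$$ where $R_S(\theta)_{lk}=b_{lk}^TL_\theta^+b_{lk}$ is the effective resistance between $v_l$ and $v_k$ in $G_\theta$. Let $J\in\mathbb{R}^{m\times n_\theta}$ be the Jacobian $J_{k,h}=\frac{\partial w_{i_kj_k}}{\partial\theta_h}$, and let $B\in\mathbb{R}^{m\times n}$ be the edge–vertex incidence matrix whose $k$-th row is $e_{i_k}-e_{j_k}$ (standard basis vectors of $\mathbb{R}^n$). Then $$\nabla_\theta\mathcal{L}=\sum_{v_l,v_k\in S}\big(F_{lk}-b_{lk}^TL_\theta^+b_{lk}\big)\cdot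 2J^T\,(BL_\theta^+b_{lk})^{\circ 2},$$ where $^{\circ 2}$ denotes the entrywise square of a vector.
   Context: For a weighted undirected graph with weights $w_{ij}$ on edges $e_{ij}$, the degree matrix $D$ is diagonal with $D_{ii}=\sum_{j:e_{ij}\in E}w_{ij}$, the adjacency matrix $A$ has $A_{ij}=A_{ji}=w_{ij}$ for $e_{ij}\in E$ and $0$ otherwise, and the Laplacian is $L=D-A$. $L^+$ denotes the Moore–Penrose pseudoinverse. For nodes $v_i,v_j$, $b_{ij}\in\mathbb{R}^n$ is the vector with $1$ in position $i$, $-1$ in position $j$, and $0$ elsewhere; the effective resistance between $v_i$ and $v_j$ is $R_{ij}=b_{ij}^TL^+b_{ij}$. $\|\cdot\|_F$ is the Frobenius norm. *)

theory Defs
  imports "HOL-Analysis.Analysis"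
begin

text \<open>Weighted graph on vertex type 'n with edges indexed by the finite type 'm;
  edge k joins src k and tgt k and carries weight w k.\<close>

definition adjacency :: "('m::finite \<Rightarrow> 'n::finite) \<Rightarrow> ('m \<Rightarrow> 'n) \<Rightarrow> ('m \<Rightarrow> real) \<Rightarrow> real^'n^'n" where
  "adjacency src tgt w = (\<chi> i j. \<Sum>k\<in>{k. (src k = i \<and> tgt k = j) \<or> (src k = j \<and> tgt k = i)}. w k)"

definition degree_matrix :: "('m::finite \<Rightarrow> 'n::finite) \<Rightarrow> ('m \<Rightarrow> 'n) \<Rightarrow> ('m \<Rightarrow> real) \<Rightarrow> real^'n^'n" where
  "degree_matrix src tgt w = (\<chi> i j. if i = j then (\<Sum>l\<in>UNIV. adjacency src tgt w $ i $ l) else 0)"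

definition laplacian :: "('m::finite \<Rightarrow> 'n::finite) \<Rightarrow> ('m \<Rightarrow> 'n) \<Rightarrow> ('m \<Rightarrow> real) \<Rightarrow> real^'n^'n" where
  "laplacian src tgt w = degree_matrix src tgt w - adjacency src tgt w"

text \<open>Moore--Penrose pseudoinverse, via its four defining equations.\<close>

definition is_pinv :: "real^'n::finite^'n \<Rightarrow> real^'n^'n \<Rightarrow> bool" where
  "is_pinv A X \<longleftrightarrow> A ** X ** A = A \<and> X ** A ** X = X \<and>
     transpose (A ** X) = A ** X \<and> transpose (X ** A) = X ** A"

definition pinv :: "real^'n::finite^'n \<Rightarrow> real^'n^'n" where
  "pinv A = (THE X. is_pinv A X)"

definition bvec :: "'n::finite \<Rightarrow> 'n \<Rightarrow> real^'n" where
  "bvec i j = axis i 1 - axis j 1"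

definition eff_res :: "real^'n::finite^'n \<Rightarrow> 'n \<Rightarrow> 'n \<Rightarrow> real" where
  "eff_res L i j = bvec i j \<bullet> (pinv L *v bvec i j)"

text \<open>Edge--vertex incidence matrix: row k is e_{src k} - e_{tgt k}.\<close>

definition incidence :: "('m::finite \<Rightarrow> 'n::finite) \<Rightarrow> ('m \<Rightarrow> 'n) \<Rightarrow> real^'n^'m" where
  "incidence src tgt = (\<chi> k. bvec (src k) (tgt k))"

definition esq :: "real^'m::finite \<Rightarrow> real^'m" where
  "esq x = (\<chi> k. (x $ k)^2)"

end

theory Submission
  imports Defs
begin


lemma matrix_add_rdistrib': "((A::real^'n::finite^'m::finite) + B) ** (C::real^'p::finite^'n) = A ** C + B ** C"
  by (vector matrix_matrix_mult_def sum.distrib[symmetric] field_simps)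

lemma matrix_diff_rdistrib': "((A::real^'n::finite^'m::finite) - B) ** (C::real^'p::finite^'n) = A ** C - B ** C"
  by (vector matrix_matrix_mult_def sum_subtractf[symmetric] field_simps)

lemma matrix_diff_ldistrib': "(C::real^'n::finite^'m::finite) ** ((A::real^'p::finite^'n) - B) = C ** A - C ** B"
  by (vector matrix_matrix_mult_def sum_subtractf[symmetric] field_simps)

lemma transpose_add': "transpose ((A::real^'n::finite^'m::finite) + B) = transpose A + transpose B"
  by (simp add: transpose_def vec_eq_iff)
lemma transpose_diff': "transpose ((A::real^'n::finite^'m::finite) - B) = transpose A - transpose B"
  by (simp add: transpose_def vec_eq_iff)
lemma transpose_zero'[simp]: "transpose (0::real^'n::finite^'m::finite) = 0"
  by (simp add: transpose_def vec_eq_iff)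

lemma inner_mv: "(x::real^'n::finite) \<bullet> ((A::real^'k::finite^'n) *v y) = (transpose A *v x) \<bullet> y"
  by (simp add: dot_lmul_matrix)

lemma pinv_unique:
  fixes A X :: "real^'n::finite^'n"
  assumes "is_pinv A X"
  shows "pinv A = X"
proof -
  have u: "Y = X" if "is_pinv A Y" for Y
  proof -
    have X: "A ** X ** A = A" "X ** A ** X = X" "transpose (A ** X) = A ** X" "transpose (X ** A) = X ** A"
      using assms by (auto simp: is_pinv_def)
    have Y: "A ** Y ** A = A" "Y ** A ** Y = Y" "transpose (A ** Y) = A ** Y" "transpose (Y ** A) = Y ** A"
      using that by (auto simp: is_pinv_def)
    have "X = X ** (A ** X)" using X by (simp add: matrix_mul_assoc)
    also have "\<dots> = X ** transpose (A ** Y ** A ** X)" using X Y by simp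
    also have "\<dots> = X ** (transpose (A ** X) ** transpose (A ** Y))"
      by (simp add: matrix_transpose_mul matrix_mul_assoc)
    also have "\<dots> = (X ** A ** X) ** A ** Y" using X Y by (simp add: matrix_mul_assoc)
    also have "\<dots> = X ** A ** Y" using X by simp
    finally have 1: "X = X ** A ** Y" .
    have "Y = (Y ** A) ** Y" using Y by (simp add: matrix_mul_assoc)
    also have "\<dots> = transpose (Y ** A ** X ** A) ** Y"
    proof -
      have "Y ** A ** X ** A = Y ** A" by (metis X(1) matrix_mul_assoc)
      thus ?thesis using Y by simp
    qed
    also have "\<dots> = (transpose (X ** A) ** transpose (Y ** A)) ** Y"
      by (simp add: matrix_transpose_mul matrix_mul_assoc)
    also have "\<dots> = (X ** A) ** ((Y ** A) ** Y)" by (simp only: X(4) Y(4) matrix_mul_assoc)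
    also have "\<dots> = X ** A ** Y" using Y by simp
    finally have 2: "Y = X ** A ** Y" .
    show ?thesis using 1 2 by simp
  qed
  show ?thesis unfolding pinv_def using assms u by blast
qed

lemma matrix_inv_works:
  fixes M :: "real^'n::finite^'n"
  assumes "invertible M"
  shows "M ** matrix_inv M = mat 1" "matrix_inv M ** M = mat 1"
proof -
  from assms obtain A where "M ** A = mat 1 \<and> A ** M = mat 1" unfolding invertible_def by blast
  hence "M ** matrix_inv M = mat 1 \<and> matrix_inv M ** M = mat 1"
    unfolding matrix_inv_def by (rule someI)
  thus "M ** matrix_inv M = mat 1" "matrix_inv M ** M = mat 1" by auto
qed

lemma matrix_inv_sym:
  fixes M :: "real^'n::finite^'n"
  assumes "invertible M" "transpose M = M"
  shows "transpose (matrix_inv M) = matrix_inv M"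
proof -
  note w = matrix_inv_works[OF assms(1)]
  have "transpose (matrix_inv M) ** M = mat 1"
    using arg_cong[OF w(1), of transpose] assms(2) by (simp add: matrix_transpose_mul)
  hence "transpose (matrix_inv M) = transpose (matrix_inv M) ** (M ** matrix_inv M)" using w by simp
  also have "\<dots> = matrix_inv M" using \<open>transpose (matrix_inv M) ** M = mat 1\<close>
    by (simp add: matrix_mul_assoc)
  finally show ?thesis .
qed



locale lgraph =
  fixes src tgt :: "'m::finite \<Rightarrow> 'n::finite"
  assumes no_loops: "\<forall>k. src k \<noteq> tgt k"
begin

lemma nl[simp]: "src k \<noteq> tgt k" "tgt k \<noteq> src k"
  using no_loops by metis+

definition bv :: "'m \<Rightarrow> real^'n" where "bv e = bvec (src e) (tgt e)"

definition Lm :: "real^'m \<Rightarrow> real^'n^'n" where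
  "Lm w = (\<chi> i j. \<Sum>e\<in>UNIV. w$e * (bv e $ i * bv e $ j))"

lemma bv_nth: "bv e $ i = (if i = src e then 1 else 0) - (if i = tgt e then 1 else 0)"
  by (simp add: bv_def bvec_def axis_def)

lemma lap_eq: "laplacian src tgt f = Lm (\<chi> e. f e)"
proof -
  have off: "laplacian src tgt f $ i $ j = Lm (\<chi> e. f e) $ i $ j" if "i \<noteq> j" for i j
  proof -
    have "laplacian src tgt f $ i $ j = - (\<Sum>k\<in>{k. (src k = i \<and> tgt k = j) \<or> (src k = j \<and> tgt k = i)}. f k)"
      using that by (simp add: laplacian_def degree_matrix_def adjacency_def)
    also have "\<dots> = (\<Sum>k\<in>UNIV. if (src k = i \<and> tgt k = j) \<or> (src k = j \<and> tgt k = i) then - f k else 0)"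
      by (simp add: sum.If_cases sum_negf)
    also have "\<dots> = Lm (\<chi> e. f e) $ i $ j"
      unfolding Lm_def using that no_loops
      by (auto intro!: sum.cong simp: bv_nth)
    finally show ?thesis .
  qed
  have dia: "laplacian src tgt f $ i $ i = Lm (\<chi> e. f e) $ i $ i" for i
  proof -
    have a0: "adjacency src tgt f $ i $ i = 0"
    proof -
      have e: "{k. (src k = i \<and> tgt k = i) \<or> (src k = i \<and> tgt k = i)} = {}"
        using no_loops by (metis (mono_tags, lifting) empty_Collect_eq)
      show ?thesis unfolding adjacency_def vec_lambda_beta e by simp
    qed
    have "laplacian src tgt f $ i $ i = (\<Sum>l\<in>UNIV. adjacency src tgt f $ i $ l)"
      by (simp add: laplacian_def degree_matrix_def a0)
    also have "\<dots> = (\<Sum>l\<in>UNIV. \<Sum>k\<in>UNIV. if (src k = i \<and> tgt k = l) \<or> (src k = l \<and> tgt k = i) then f k else 0)"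
      by (simp add: adjacency_def sum.If_cases)
    also have "\<dots> = (\<Sum>k\<in>UNIV. \<Sum>l\<in>UNIV. if (src k = i \<and> tgt k = l) \<or> (src k = l \<and> tgt k = i) then f k else 0)"
      by (rule sum.swap)
    also have "\<dots> = (\<Sum>k\<in>UNIV. if src k = i \<or> tgt k = i then f k else 0)"
    proof (rule sum.cong[OF refl])
      fix k
      show "(\<Sum>l\<in>UNIV. if (src k = i \<and> tgt k = l) \<or> (src k = l \<and> tgt k = i) then f k else 0) =
            (if src k = i \<or> tgt k = i then f k else 0)"
      proof (cases "src k = i")
        case True
        then have "tgt k \<noteq> i" using no_loops by metis
        then show ?thesis using True by (simp add: sum.delta eq_commute)
      next
        case False
        then show ?thesis by (simp add: sum.delta eq_commute)
      qed
    qed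
    also have "\<dots> = Lm (\<chi> e. f e) $ i $ i"
      unfolding Lm_def using no_loops
      by (auto intro!: sum.cong simp: bv_nth)
    finally show ?thesis .
  qed
  show ?thesis
    by (metis (full_types) dia off vec_eq_iff)
qed

lemma Lm_mv: "Lm w *v x = (\<Sum>e\<in>UNIV. (w$e * (bv e \<bullet> x)) *\<^sub>R bv e)"
  by (simp add: vec_eq_iff Lm_def matrix_vector_mult_def inner_vec_def sum_distrib_left
      sum_distrib_right sum_component mult_ac)
    (subst sum.swap; simp add: sum_distrib_left mult_ac)

lemma Lm_sym: "transpose (Lm w) = Lm w"
  by (simp add: Lm_def transpose_def vec_eq_iff mult_ac)

lemma Lm_quad: "x \<bullet> (Lm w *v x) = (\<Sum>e\<in>UNIV. w$e * (bv e \<bullet> x)^2)"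
  by (simp add: Lm_mv inner_sum_right power2_eq_square inner_commute mult_ac)

lemma Lm_linear: "Lm (a + b) = Lm a + Lm b" "Lm (a - b) = Lm a - Lm b"
  by (simp_all add: Lm_def vec_eq_iff sum.distrib sum_subtractf algebra_simps)

definition K :: "(real^'n) set" where "K = {x. \<forall>e. bv e \<bullet> x = 0}"

lemma subspace_K: "subspace K"
  unfolding K_def subspace_def by (auto simp: inner_add_right)

lemma P_exists: "\<exists>P::real^'n^'n. transpose P = P \<and> (\<forall>x. P *v x \<in> K) \<and> (\<forall>x\<in>K. P *v x = x)"
proof -
  obtain B where B: "B \<subseteq> K" "pairwise orthogonal B" "\<And>x. x \<in> B \<Longrightarrow> norm x = 1"
    "independent B" "span B = K"
    using orthonormal_basis_subspace[OF subspace_K] by metis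
  have fB: "finite B" using B(4) independent_imp_finite by blast
  define P :: "real^'n^'n" where "P = (\<chi> i j. \<Sum>u\<in>B. u$i * u$j)"
  have Pv: "P *v x = (\<Sum>u\<in>B. (u \<bullet> x) *\<^sub>R u)" for x
    by (simp add: vec_eq_iff P_def matrix_vector_mult_def inner_vec_def sum_distrib_left
      sum_distrib_right sum_component mult_ac) (subst sum.swap; simp add: sum_distrib_left mult_ac)
  have "transpose P = P" by (simp add: P_def transpose_def vec_eq_iff mult_ac)
  moreover have "P *v x \<in> K" for x
    unfolding Pv using B(1) subspace_K
    by (intro subspace_sum subspace_scale) auto
  moreover have "P *v x = x" if "x \<in> K" for x
  proof -
    have "(\<Sum>u\<in>B. (x \<bullet> u) *\<^sub>R u) = x"
      using orthonormal_basis_expand[OF B(2) B(3)] that B(5) fB by auto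
    thus ?thesis unfolding Pv by (simp add: inner_commute)
  qed
  ultimately show ?thesis by blast
qed

definition P :: "real^'n^'n" where
  "P = (SOME P::real^'n^'n. transpose P = P \<and> (\<forall>x. P *v x \<in> K) \<and> (\<forall>x\<in>K. P *v x = x))"

lemma P_props: "transpose P = P" "P *v x \<in> K" "x \<in> K \<Longrightarrow> P *v x = x"
  using someI_ex[OF P_exists] unfolding P_def[symmetric] by auto

lemma bv_P: "bv e \<bullet> (P *v x) = 0"
  using P_props(2)[of x] unfolding K_def by auto

lemma matrix_eq0: "(\<And>x. (A::real^'n^'n) *v x = 0) \<Longrightarrow> A = 0"
  by (metis matrix_eq matrix_vector_mult_0)

lemma Lm_P: "Lm w ** P = 0"
  by (rule matrix_eq0) (simp add: matrix_vector_mul_assoc[symmetric] Lm_mv bv_P)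

lemma P_Lm: "P ** Lm w = 0"
proof -
  have "transpose (Lm w ** P) = 0" by (simp add: Lm_P)
  thus ?thesis by (simp add: matrix_transpose_mul Lm_sym P_props(1))
qed

lemma P_P: "P ** P = P"
  by (subst matrix_eq) (simp add: matrix_vector_mul_assoc[symmetric] P_props)

definition M :: "real^'m \<Rightarrow> real^'n^'n" where "M w = Lm w + P"

definition pos :: "real^'m \<Rightarrow> bool" where "pos w \<longleftrightarrow> (\<forall>e. w$e > 0)"

lemma M_sym: "transpose (M w) = M w"
  by (simp add: M_def transpose_add' Lm_sym P_props(1))

lemma M_inv: assumes "pos w" shows "invertible (M w)"
proof -
  have "x = 0" if x: "M w *v x = 0" for x
  proof -
    have "x \<bullet> (P *v x) = (P *v x) \<bullet> (P *v x)"
    proof -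
      have "x \<bullet> (P *v x) = x \<bullet> (P *v (P *v x))" using P_props(2,3) by simp
      also have "\<dots> = (P *v x) \<bullet> (P *v x)" by (simp add: inner_mv P_props(1))
      finally show ?thesis .
    qed
    have "0 = x \<bullet> (M w *v x)" using x by simp
    also have "\<dots> = (\<Sum>e\<in>UNIV. w$e * (bv e \<bullet> x)^2) + (P *v x) \<bullet> (P *v x)"
      by (simp add: M_def matrix_vector_mult_add_rdistrib inner_add_right Lm_quad
          \<open>x \<bullet> (P *v x) = (P *v x) \<bullet> (P *v x)\<close>)
    finally have s: "(\<Sum>e\<in>UNIV. w$e * (bv e \<bullet> x)^2) + (P *v x) \<bullet> (P *v x) = 0" by simp
    have nn: "\<And>e. e \<in> UNIV \<Longrightarrow> 0 \<le> w$e * (bv e \<bullet> x)^2" using assms by (auto simp: pos_def less_imp_le)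
    have "(\<Sum>e\<in>UNIV. w$e * (bv e \<bullet> x)^2) = 0" "(P *v x) \<bullet> (P *v x) = 0"
    proof -
      have "0 \<le> (\<Sum>e\<in>UNIV. w$e * (bv e \<bullet> x)^2)" by (rule sum_nonneg) (rule nn)
      thus "(\<Sum>e\<in>UNIV. w$e * (bv e \<bullet> x)^2) = 0" "(P *v x) \<bullet> (P *v x) = 0"
        using s inner_ge_zero[of "P *v x"] by linarith+
    qed
    hence "\<forall>e\<in>UNIV. w$e * (bv e \<bullet> x)^2 = 0" "P *v x = 0"
      using sum_nonneg_eq_0_iff[of UNIV "\<lambda>e. w$e * (bv e \<bullet> x)^2"] nn by auto
    hence "\<forall>e. w$e = 0 \<or> bv e \<bullet> x = 0" by simp
    moreover have "\<forall>e. w$e \<noteq> 0" using assms unfolding pos_def by (simp add: less_imp_neq[symmetric])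
    ultimately have "x \<in> K" unfolding K_def by blast
    thus "x = 0" using P_props(3) \<open>P *v x = 0\<close> by simp
  qed
  thus ?thesis
    by (simp add: invertible_left_inverse matrix_left_invertible_ker)
qed

lemma pinv_Lm: assumes "pos w" shows "pinv (Lm w) = matrix_inv (M w) - P"
proof (rule pinv_unique)
  let ?N = "matrix_inv (M w)"
  note w = matrix_inv_works[OF M_inv[OF assms]]
  have PM: "P ** M w = P" unfolding M_def by (simp add: matrix_add_ldistrib P_Lm P_P)
  have MP: "M w ** P = P" unfolding M_def by (simp add: matrix_add_rdistrib' Lm_P P_P)
  have PN: "P ** ?N = P" by (metis PM w(1) matrix_mul_assoc matrix_mul_rid)
  have NP: "?N ** P = P" by (metis MP w(2) matrix_mul_assoc matrix_mul_lid)
  have LM: "Lm w = M w - P" by (simp add: M_def)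
  have "Lm w ** (?N - P) = Lm w ** ?N" by (simp add: matrix_diff_ldistrib' Lm_P)
  also have "\<dots> = (M w - P) ** ?N" by (simp add: M_def)
  also have "\<dots> = mat 1 - P" by (simp add: matrix_diff_rdistrib' w PN)
  finally have LX: "Lm w ** (?N - P) = mat 1 - P" .
  have "(?N - P) ** Lm w = ?N ** Lm w" by (simp add: matrix_diff_rdistrib' P_Lm)
  also have "\<dots> = ?N ** (M w - P)" by (simp add: M_def)
  also have "\<dots> = mat 1 - P" by (simp add: matrix_diff_ldistrib' w NP)
  finally have XL: "(?N - P) ** Lm w = mat 1 - P" .
  have tP: "transpose (mat 1 - P) = mat 1 - P"
    by (metis P_props(1) transpose_mat transpose_diff')
  show "is_pinv (Lm w) (?N - P)"
    unfolding is_pinv_def LX XL tP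
    by (simp add: matrix_diff_rdistrib' P_Lm matrix_diff_ldistrib' PN P_P)
qed

end


lemma differentiable_prod':
  fixes f :: "'i \<Rightarrow> 'a::real_normed_vector \<Rightarrow> real"
  shows "(\<And>i. i \<in> I \<Longrightarrow> f i differentiable (at x within S)) \<Longrightarrow>
    (\<lambda>x. \<Prod>i\<in>I. f i x) differentiable (at x within S)"
proof (induct I rule: infinite_finite_induct)
  case (infinite A) then show ?case by simp
next
  case empty then show ?case by simp
next
  case (insert i I)
  have e: "(\<lambda>x. \<Prod>i\<in>insert i I. f i x) = (\<lambda>x. f i x * (\<Prod>i\<in>I. f i x))"
    using insert(1,2) by simp
  show ?case unfolding e
    by (rule differentiable_mult[OF insert.prems[of i] insert.hyps(3)]) (simp_all add: insert.prems)
qed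

lemma det_differentiable:
  fixes A :: "'a::real_normed_vector \<Rightarrow> real^'n::finite^'n"
  assumes "\<And>i j. (\<lambda>x. A x $ i $ j) differentiable (at x0)"
  shows "(\<lambda>x. det (A x)) differentiable (at x0)"
proof -
  have "(\<lambda>x. real_of_int (sign p) * (\<Prod>i\<in>UNIV. A x $ i $ p i)) differentiable at x0" for p
  proof -
    have "(\<lambda>x. (\<Prod>i\<in>UNIV. A x $ i $ p i)) differentiable at x0"
      by (rule differentiable_prod') (rule assms)
    thus ?thesis by (intro differentiable_mult differentiable_const)
  qed
  hence "(\<lambda>x. \<Sum>p\<in>{p. p permutes (UNIV::'n set)}. real_of_int (sign p) * (\<Prod>i\<in>UNIV. A x $ i $ p i)) differentiable at x0"
    by (intro differentiable_sum) (auto intro: finite_permutations)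
  thus ?thesis unfolding det_def .
qed

lemma vec_differentiable:
  fixes f :: "'a::real_normed_vector \<Rightarrow> real^'n::finite"
  assumes "\<And>i. (\<lambda>x. f x $ i) differentiable (at x0)"
  shows "f differentiable (at x0)"
proof (rule iffD2[OF differentiable_componentwise_within], intro ballI)
  fix b :: "real^'n" assume "b \<in> Basis"
  then obtain i u where "u \<in> (Basis::real set)" "b = axis i u" unfolding Basis_vec_def by blast
  hence "b = axis i 1" by simp
  then show "(\<lambda>x. f x \<bullet> b) differentiable (at x0)" using assms by (simp add: inner_axis)
qed

lemma vec_has_derivative:
  fixes f :: "'a::real_normed_vector \<Rightarrow> real^'n::finite"
  assumes "\<And>i. ((\<lambda>x. f x $ i) has_derivative (\<lambda>h. f' h $ i)) (at x0)"
  shows "(f has_derivative f') (at x0)"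
proof (rule iffD2[OF has_derivative_componentwise_within], intro ballI)
  fix b :: "real^'n" assume "b \<in> Basis"
  then obtain i u where "u \<in> (Basis::real set)" "b = axis i u" unfolding Basis_vec_def by blast
  hence "b = axis i 1" by simp
  then show "((\<lambda>x. f x \<bullet> b) has_derivative (\<lambda>x. f' x \<bullet> b)) (at x0)" using assms by (simp add: inner_axis)
qed

context lgraph begin

lemma open_pos: "open {w. pos w}"
proof -
  have "{w. pos w} = (\<Inter>e\<in>UNIV. {w::real^'m. 0 < w$e})" by (auto simp: pos_def)
  moreover have "open {w::real^'m. 0 < w$e}" for e
    by (intro open_Collect_less continuous_intros)
  ultimately show ?thesis by auto
qed

lemma M_entry_deriv: "((\<lambda>w. M w $ i $ j) has_derivative (\<lambda>d. Lm d $ i $ j)) (at w0)"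
proof -
  have e: "(\<lambda>w. M w $ i $ j) = (\<lambda>w. (\<Sum>e\<in>UNIV. w$e * (bv e $ i * bv e $ j)) + P $ i $ j)"
    by (simp add: M_def Lm_def)
  have bl: "bounded_linear (\<lambda>d::real^'m. \<Sum>e\<in>UNIV. d$e * (bv e $ i * bv e $ j))"
    by (intro bounded_linear_sum bounded_linear_mult_const bounded_linear_vec_nth)
  show ?thesis unfolding e
    using has_derivative_add_const[OF bounded_linear_imp_has_derivative[OF bl]]
    by (simp add: Lm_def)
qed

lemma M_entry_diff: "(\<lambda>w. M w $ i $ j) differentiable (at w0)"
  using M_entry_deriv differentiable_def by blast

definition N :: "real^'m \<Rightarrow> real^'n^'n" where "N w = matrix_inv (M w)"

lemma y_diff:
  assumes "pos w0"
  shows "(\<lambda>w. N w *v b) differentiable (at w0)"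
proof -
  define cr where "cr w = (\<chi> k. det(\<chi> i j. if j=k then b$i else M w$i$j) / det (M w))" for w
  have eq: "N w *v b = cr w" if "pos w" for w
  proof -
    have d: "det (M w) \<noteq> 0" using M_inv[OF that] invertible_det_nz by blast
    have "M w *v (N w *v b) = b"
      by (simp add: N_def matrix_vector_mul_assoc matrix_inv_works[OF M_inv[OF that]])
    thus ?thesis unfolding cr_def using cramer[OF d] by blast
  qed
  have d: "det (M w0) \<noteq> 0" using M_inv[OF assms] invertible_det_nz by blast
  have "cr differentiable (at w0)"
  proof (rule vec_differentiable)
    fix k
    have "(\<lambda>x. det (\<chi> i j. if j = k then b $ i else M x $ i $ j) / det (M x)) differentiable at w0"
    proof (rule differentiable_divide)
      show "(\<lambda>x. det (\<chi> i j. if j = k then b $ i else M x $ i $ j)) differentiable at w0"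
      proof (rule det_differentiable)
        fix i j
        show "(\<lambda>x. (\<chi> i j. if j = k then b $ i else M x $ i $ j) $ i $ j) differentiable at w0"
          by (cases "j = k") (simp_all add: M_entry_diff)
      qed
      show "(\<lambda>x. det (M x)) differentiable at w0"
        by (rule det_differentiable) (rule M_entry_diff)
    qed (rule d)
    thus "(\<lambda>x. cr x $ k) differentiable at w0" unfolding cr_def by simp
  qed
  then obtain D where "(cr has_derivative D) (at w0)" unfolding differentiable_def by blast
  hence "((\<lambda>w. N w *v b) has_derivative D) (at w0)"
    by (rule has_derivative_transform_within_open[OF _ open_pos]) (use assms eq in auto)
  thus ?thesis unfolding differentiable_def by blast
qed

lemma mv_neg: "(A::real^'n^'n) *v (- x) = - (A *v x)"
  by (simp add: vec_eq_iff matrix_vector_mult_def sum_negf)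

lemma y_deriv:
  assumes "pos w0"
  shows "((\<lambda>w. N w *v b) has_derivative (\<lambda>d. - (N w0 *v (Lm d *v (N w0 *v b))))) (at w0)"
proof -
  obtain y' where y': "((\<lambda>w. N w *v b) has_derivative y') (at w0)"
    using y_diff[OF assms] unfolding differentiable_def by blast
  let ?y0 = "N w0 *v b"
  have comp: "((\<lambda>w. (N w *v b)$j) has_derivative (\<lambda>h. y' h $ j)) (at w0)" for j
    by (rule bounded_linear.has_derivative[OF bounded_linear_vec_nth y'])
  have g1: "((\<lambda>w. M w *v (N w *v b)) has_derivative (\<lambda>d. Lm d *v ?y0 + M w0 *v y' d)) (at w0)"
  proof (rule vec_has_derivative)
    fix i
    have "((\<lambda>w. \<Sum>j\<in>UNIV. M w$i$j * (N w *v b)$j) has_derivative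
       (\<lambda>h. \<Sum>j\<in>UNIV. M w0$i$j * y' h$j + Lm h$i$j * (N w0 *v b)$j)) (at w0)"
      by (intro has_derivative_sum has_derivative_mult M_entry_deriv comp)
    thus "((\<lambda>w. (M w *v (N w *v b)) $ i) has_derivative (\<lambda>h. (Lm h *v ?y0 + M w0 *v y' h) $ i)) (at w0)"
      by (simp add: matrix_vector_mult_def sum.distrib add.commute)
  qed
  have g2: "((\<lambda>w. M w *v (N w *v b)) has_derivative (\<lambda>d. 0)) (at w0)"
  proof (rule has_derivative_transform_within_open[OF has_derivative_const open_pos])
    show "w0 \<in> {w. pos w}" using assms by simp
    fix w assume "w \<in> {w. pos w}"
    thus "b = M w *v (N w *v b)"
      by (simp add: N_def matrix_vector_mul_assoc matrix_inv_works[OF M_inv])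
  qed
  have z: "Lm d *v ?y0 + M w0 *v y' d = 0" for d
    using has_derivative_unique[OF g1 g2] by meson
  have "y' d = - (N w0 *v (Lm d *v ?y0))" for d
  proof -
    have "M w0 *v y' d = - (Lm d *v ?y0)" using z[of d] by (simp add: eq_neg_iff_add_eq_0 add.commute)
    hence "N w0 *v (M w0 *v y' d) = - (N w0 *v (Lm d *v ?y0))" by (simp add: mv_neg)
    thus ?thesis by (simp add: N_def matrix_vector_mul_assoc matrix_inv_works[OF M_inv[OF assms]])
  qed
  hence "y' = (\<lambda>d. - (N w0 *v (Lm d *v ?y0)))" by auto
  thus ?thesis using y' by simp
qed

lemma R_deriv:
  assumes "pos w0"
  shows "((\<lambda>w. eff_res (Lm w) l k) has_derivative
     (\<lambda>d. - (\<Sum>e\<in>UNIV. d$e * (bv e \<bullet> (pinv (Lm w0) *v bvec l k))^2))) (at w0)"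
proof -
  define b where "b = bvec l k"
  let ?y0 = "N w0 *v b"
  have eq: "eff_res (Lm w) l k = b \<bullet> (N w *v b) - b \<bullet> (P *v b)" if "pos w" for w
    by (simp add: eff_res_def pinv_Lm[OF that] b_def N_def matrix_vector_mult_diff_rdistrib inner_diff_right)
  have d1: "((\<lambda>w. b \<bullet> (N w *v b) - b \<bullet> (P *v b)) has_derivative
     (\<lambda>d. b \<bullet> (- (N w0 *v (Lm d *v ?y0))) - 0)) (at w0)"
    by (intro has_derivative_diff has_derivative_const
        bounded_linear.has_derivative[OF bounded_linear_inner_right y_deriv[OF assms]])
  have d2: "((\<lambda>w. eff_res (Lm w) l k) has_derivative
     (\<lambda>d. b \<bullet> (- (N w0 *v (Lm d *v ?y0))) - 0)) (at w0)"
    by (rule has_derivative_transform_within_open[OF d1 open_pos]) (use assms eq in auto)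
  have tN: "transpose (N w0) = N w0"
    unfolding N_def by (rule matrix_inv_sym[OF M_inv[OF assms] M_sym])
  have bve: "bv e \<bullet> (pinv (Lm w0) *v bvec l k) = bv e \<bullet> ?y0" for e
    by (simp add: pinv_Lm[OF assms] b_def N_def matrix_vector_mult_diff_rdistrib inner_diff_right bv_P)
  have "b \<bullet> (- (N w0 *v (Lm d *v ?y0))) - 0 = - (\<Sum>e\<in>UNIV. d$e * (bv e \<bullet> (pinv (Lm w0) *v bvec l k))^2)" for d
  proof -
    have "b \<bullet> (- (N w0 *v (Lm d *v ?y0))) = - ((transpose (N w0) *v b) \<bullet> (Lm d *v ?y0))"
      by (simp add: inner_mv)
    also have "\<dots> = - (?y0 \<bullet> (Lm d *v ?y0))" using tN by simp
    also have "\<dots> = - (\<Sum>e\<in>UNIV. d$e * (bv e \<bullet> ?y0)^2)" by (simp add: Lm_quad)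
    finally show ?thesis by (simp add: bve)
  qed
  thus ?thesis using d2 by (simp add: b_def)
qed

end


lemma bl_expand:
  fixes f :: "real^'t::finite \<Rightarrow> real"
  assumes bl: "bounded_linear f"
  shows "f h = (\<Sum>i\<in>UNIV. h$i * f (axis i 1))"
proof -
  have "h = (\<Sum>i\<in>UNIV. h$i *\<^sub>R axis i 1)" using basis_expansion[of h] by (simp add: scalar_mult_eq_scaleR)
  hence "f h = f (\<Sum>i\<in>UNIV. h$i *\<^sub>R axis i 1)" by simp
  also have "\<dots> = (\<Sum>i\<in>UNIV. f (h$i *\<^sub>R axis i 1))"
    by (rule linear_sum[OF bounded_linear.linear[OF bl]])
  also have "\<dots> = (\<Sum>i\<in>UNIV. h$i * f (axis i 1))"
    using linear_scale[OF bounded_linear.linear[OF bl]] by simp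
  finally show ?thesis .
qed

lemma incidence_nth: "(incidence src tgt *v x) $ e = bvec (src e) (tgt e) \<bullet> x"
  by (simp add: incidence_def matrix_vector_mult_def inner_vec_def mult.commute)

theorem proposition1:
  fixes src tgt :: "'m::finite \<Rightarrow> 'n::finite"
    and C :: "'m \<Rightarrow> real^'q::finite"
    and p :: "real^'t::finite \<Rightarrow> real^'q \<Rightarrow> real"
    and S :: "'n set"
    and F :: "'n \<Rightarrow> 'n \<Rightarrow> real"
    and th0 :: "real^'t"
  assumes no_loops: "\<forall>k. src k \<noteq> tgt k"
    and simple: "\<forall>k k'. {src k, tgt k} = {src k', tgt k'} \<longrightarrow> k = k'"
    and pos: "\<forall>t c. p t c > 0"
    and diff: "\<forall>t c. (\<lambda>u. p u c) differentiable (at t)"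
    and Fdiag: "\<forall>l\<in>S. F l l = 0"
  shows "((\<lambda>t. \<Sum>l\<in>S. \<Sum>k\<in>S. (eff_res (laplacian src tgt (\<lambda>e. p t (C e))) l k - F l k)^2)
          has_derivative
          (\<lambda>h. (\<Sum>l\<in>S. \<Sum>k\<in>S.
              (F l k - eff_res (laplacian src tgt (\<lambda>e. p th0 (C e))) l k) *\<^sub>R
              (2 *\<^sub>R (transpose (\<chi> e hh. frechet_derivative (\<lambda>t. p t (C e)) (at th0) (axis hh 1))
                 *v esq (incidence src tgt *v (pinv (laplacian src tgt (\<lambda>e. p th0 (C e))) *v bvec l k)))))
             \<bullet> h)) (at th0)"
proof -
  interpret G: lgraph src tgt using no_loops by unfold_locales
  define W where "W t = (\<chi> e. p t (C e))" for t
  define fd where "fd e = frechet_derivative (\<lambda>t. p t (C e)) (at th0)" for e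
  have fdw: "((\<lambda>t. p t (C e)) has_derivative fd e) (at th0)" for e
    unfolding fd_def using diff frechet_derivative_works by blast
  have bl: "bounded_linear (fd e)" for e using fdw has_derivative_bounded_linear by blast
  have hW: "(W has_derivative (\<lambda>h. \<chi> e. fd e h)) (at th0)"
    by (rule vec_has_derivative) (simp add: W_def fdw)
  have lap: "laplacian src tgt (\<lambda>e. p t (C e)) = G.Lm (W t)" for t
    by (simp add: G.lap_eq W_def)
  have posW: "G.pos (W t)" for t using pos by (simp add: G.pos_def W_def)
  define X0 where "X0 = pinv (G.Lm (W th0))"
  define R0 where "R0 l k = eff_res (G.Lm (W th0)) l k" for l k
  define D where "D l k d = - (\<Sum>e\<in>UNIV. d$e * (G.bv e \<bullet> (X0 *v bvec l k))^2)" for l k and d :: "real^'m"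
  have Rc: "((\<lambda>t. eff_res (G.Lm (W t)) l k) has_derivative (\<lambda>h. D l k (\<chi> e. fd e h))) (at th0)" for l k
    using has_derivative_compose[OF hW G.R_deriv[OF posW[of th0], of l k]]
    unfolding D_def X0_def .
  have main: "((\<lambda>t. \<Sum>l\<in>S. \<Sum>k\<in>S. (eff_res (G.Lm (W t)) l k - F l k)^2) has_derivative
     (\<lambda>h. \<Sum>l\<in>S. \<Sum>k\<in>S. of_nat 2 * (D l k (\<chi> e. fd e h) - 0) * (R0 l k - F l k)^(2-1))) (at th0)"
    unfolding R0_def
    by (intro has_derivative_sum has_derivative_power has_derivative_diff Rc has_derivative_const)
  show ?thesis
    unfolding lap
  proof (rule has_derivative_eq_rhs[OF main], rule ext)
    fix h
    let ?J = "(\<chi> e hh. frechet_derivative (\<lambda>t. p t (C e)) (at th0) (axis hh 1)) :: real^'t^'m"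
    have Jhe: "(?J *v h) $ e = fd e h" for e
    proof -
      have "(?J *v h) $ e = (\<Sum>i\<in>UNIV. fd e (axis i 1) * h$i)"
        by (simp add: matrix_vector_mult_def fd_def)
      also have "\<dots> = fd e h" using bl_expand[OF bl, of e h] by (simp add: mult.commute)
      finally show ?thesis .
    qed
    have Jh: "?J *v h = (\<chi> e. fd e h)" by (simp add: vec_eq_iff Jhe)
    have inner_eq: "(transpose ?J *v v) \<bullet> h = v \<bullet> (\<chi> e. fd e h)" for v
      using inner_mv[of v ?J h] Jh by simp
    have trm: "(transpose ?J *v esq (incidence src tgt *v (X0 *v bvec l k))) \<bullet> h = - D l k (\<chi> e. fd e h)" for l k
      unfolding inner_eq
      by (simp add: D_def inner_vec_def esq_def incidence_nth G.bv_def mult.commute)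
    show "(\<Sum>l\<in>S. \<Sum>k\<in>S. of_nat 2 * (D l k (\<chi> e. fd e h) - 0) * (R0 l k - F l k)^(2-1)) =
      (\<Sum>l\<in>S. \<Sum>k\<in>S. (F l k - eff_res (G.Lm (W th0)) l k) *\<^sub>R
        (2 *\<^sub>R (transpose ?J *v esq (incidence src tgt *v (pinv (G.Lm (W th0)) *v bvec l k))))) \<bullet> h"
      unfolding inner_sum_left inner_scaleR_left X0_def[symmetric] R0_def[symmetric] trm
      by (intro sum.cong refl) (simp add: algebra_simps)
  qed
qed


end
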